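(* Let $X_m$ be a space of labelled lines and let $T_n$ be an $n$-rule map on $X_m$ with defining rule sequence $r_1,\dots,r_n$, $r_i=r(\,\cdot\,;\theta_i,o_i,L_{a_i})$, and let $c_1,\dots,c_n$ be the similarity coefficients of the rules and $C=c_1c_2\cdots c_n$ the similarity coefficient of the induced map $\hat T_n=T_n^n$. If $0\le C<1$, then $T_n$ admits a unique periodic orbit of period $n$.
   Context: $X_m\subset\mathbb{R}^2$ is a union of $m\ge3$ lines, labelled $L_1,\dots,L_m$, not all concurrent, with at least one line neither parallel nor perpendicular to any other. For a point $x$ on a line of $X_m$, a line $L_j$ of $X_m$, and $\theta\in(0,\pi/2)$, there are two lines through $x$ meeting $L_j$ at angle $\theta$; their intersection points with $L_j$ are the orientation $0$ and orientation $1$, angle $\theta$ projections of $x$ onto $L_j$ (the labels $0,1$ being assigned by the fixed convention "left" and "right" projection as seen from $x$, under which, for fixed $\theta$ and orientation, the projection from one line onto another is a projection along a fixed direction); for $\theta=\pi/2$ there is a single (perpendicular) projection; if $x\in L_j$ its projection is $x$. A rule $r(x;\theta,o,L_j)$ maps $x\in X_m$ to its angle $\theta$, orientation $o$ projection onto $L_j$ ($\theta\in(0,\pi/2]$, $o\in\{0,1\}$). A rule sequence is a sequence of $n\ge m$ rules $r_1,\dots,r_n$ such that consecutive rules, including $r_n$ and $r_1$, map onto different lines, and every line of $X_m$ is mapped onto by at least one rule. The $n$-rule map $T_n:X_m\to X_m$ is iterated by cycling through the rules: the $k$-th iterate applies $r_{((k-1)\bmod n)+1}$ to the $(k-1)$-th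 iterate, so e.g. $T_n^{n+2}(x)=r_2(r_1(r_n(\cdots r_2(r_1(x)))))$. $T_n$ is assumed non-redundant (there is no rule sequence of length $n'$ with $m\le n'<n$ giving the same orbits for all $x$). The orbit of $x$ is $\{x,T_n(x),T_n^2(x),\dots\}$. With $a_0:=a_n$, the restriction of $r_i$ to $L_{a_{i-1}}$ (mapping into $L_{a_i}$) satisfies $d(r_i(x),r_i(y))=c_i\,d(x,y)$ for all $x,y\in L_{a_{i-1}}$, for a constant $c_i\ge0$ ($d$ the Euclidean metric); $c_i$ is the similarity coefficient of $r_i$. The induced map $\hat T_n=T_n^n$ maps $L_{a_n}$ to itself. *)

theory Defs
  imports "HOL-Analysis.Analysis"
begin

text \<open>The plane is modelled as the complex numbers (Euclidean metric = dist on complex).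
  Line j of the configuration is {P j + t * U j | t real}, with U j a nonzero direction.\<close>

definition cross2 :: "complex \<Rightarrow> complex \<Rightarrow> real" where
  "cross2 a b = Im (cnj a * b)"

definition lline :: "(nat \<Rightarrow> complex) \<Rightarrow> (nat \<Rightarrow> complex) \<Rightarrow> nat \<Rightarrow> complex set" where
  "lline P U j = {P j + of_real t * U j | t. True}"

definition Xspace :: "(nat \<Rightarrow> complex) \<Rightarrow> (nat \<Rightarrow> complex) \<Rightarrow> nat \<Rightarrow> complex set" where
  "Xspace P U m = (\<Union>j<m. lline P U j)"

text \<open>Projection of x onto the line through p with direction u, along direction w
  (w not parallel to u). If x lies on the line, the result is x.\<close>
definition proj_along :: "complex \<Rightarrow> complex \<Rightarrow> complex \<Rightarrow> complex \<Rightarrow> complex" where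
  "proj_along p u w x = p + of_real (cross2 (x - p) w / cross2 u w) * u"

text \<open>Rule r(x; theta, ori, L_j): the line through x meeting L_j at angle theta, with
  direction U j rotated by +theta (orientation False = 0) or -theta (orientation True = 1).
  For theta = pi/2 both orientations give the perpendicular projection.\<close>
definition rule :: "(nat \<Rightarrow> complex) \<Rightarrow> (nat \<Rightarrow> complex) \<Rightarrow> real \<Rightarrow> bool \<Rightarrow> nat \<Rightarrow> complex \<Rightarrow> complex" where
  "rule P U \<theta> ori j x = proj_along (P j) (U j) (U j * cis (if ori then - \<theta> else \<theta>)) x"

definition is_rule_seq :: "nat \<Rightarrow> nat \<Rightarrow> (nat \<Rightarrow> real) \<Rightarrow> (nat \<Rightarrow> bool) \<Rightarrow> (nat \<Rightarrow> nat) \<Rightarrow> bool" where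
  "is_rule_seq m n \<theta> ori a \<longleftrightarrow>
     m \<le> n \<and>
     (\<forall>i\<in>{1..n}. a i < m \<and> 0 < \<theta> i \<and> \<theta> i \<le> pi / 2) \<and>
     (\<forall>i\<in>{1..<n}. a i \<noteq> a (Suc i)) \<and> a n \<noteq> a 1 \<and>
     (\<forall>j<m. \<exists>i\<in>{1..n}. a i = j)"

text \<open>k-th iterate of the n-rule map: the k-th step applies rule number ((k-1) mod n)+1.\<close>
primrec Titer :: "(nat \<Rightarrow> complex) \<Rightarrow> (nat \<Rightarrow> complex) \<Rightarrow> nat \<Rightarrow> (nat \<Rightarrow> real) \<Rightarrow> (nat \<Rightarrow> bool)
    \<Rightarrow> (nat \<Rightarrow> nat) \<Rightarrow> nat \<Rightarrow> complex \<Rightarrow> complex" where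
  "Titer P U n \<theta> ori a 0 x = x"
| "Titer P U n \<theta> ori a (Suc k) x =
     (let i = k mod n + 1 in rule P U (\<theta> i) (ori i) (a i) (Titer P U n \<theta> ori a k x))"

definition orbit :: "(nat \<Rightarrow> complex) \<Rightarrow> (nat \<Rightarrow> complex) \<Rightarrow> nat \<Rightarrow> (nat \<Rightarrow> real) \<Rightarrow> (nat \<Rightarrow> bool)
    \<Rightarrow> (nat \<Rightarrow> nat) \<Rightarrow> complex \<Rightarrow> complex set" where
  "orbit P U n \<theta> ori a x = range (\<lambda>k. Titer P U n \<theta> ori a k x)"

end

theory Submission imports Defs begin
lemma lline_closed: "closed (lline P U j)"
proof -
  have "lline P U j = (+) (P j) ` span {U j}"
    by (auto simp: lline_def span_singleton scaleR_conv_of_real image_iff)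
  then show ?thesis by (simp add: closed_translation closed_subspace)
qed

lemma rule_in: "rule P U th bb j x \<in> lline P U j"
  unfolding rule_def proj_along_def lline_def by blast

lemma iter_lemma:
  assumes simil: "\<forall>i\<in>{1..n}. c i \<ge> 0 \<and>
                  (\<forall>x\<in>lline P U (a (if i = 1 then n else i - 1)).
                   \<forall>y\<in>lline P U (a (if i = 1 then n else i - 1)).
                     dist (rule P U (\<theta> i) (ori i) (a i) x) (rule P U (\<theta> i) (ori i) (a i) y)
                       = c i * dist x y)"
    and x: "x \<in> lline P U (a n)" and y: "y \<in> lline P U (a n)"
  shows "k \<le> n \<Longrightarrow> Titer P U n \<theta> ori a k x \<in> lline P U (a (if k = 0 then n else k)) \<and>
     Titer P U n \<theta> ori a k y \<in> lline P U (a (if k = 0 then n else k)) \<and>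
     dist (Titer P U n \<theta> ori a k x) (Titer P U n \<theta> ori a k y) = (\<Prod>i=1..k. c i) * dist x y"
proof (induction k)
  case 0
  then show ?case using x y by simp
next
  case (Suc k)
  then have kn: "k < n" by simp
  then have im: "k mod n = k" by simp
  have IH: "Titer P U n \<theta> ori a k x \<in> lline P U (a (if Suc k = 1 then n else Suc k - 1))"
     "Titer P U n \<theta> ori a k y \<in> lline P U (a (if Suc k = 1 then n else Suc k - 1))"
     "dist (Titer P U n \<theta> ori a k x) (Titer P U n \<theta> ori a k y) = (\<Prod>i=1..k. c i) * dist x y"
    using Suc by auto
  have S: "Suc k \<in> {1..n}" using kn by simp
  have "dist (Titer P U n \<theta> ori a (Suc k) x) (Titer P U n \<theta> ori a (Suc k) y)
     = c (Suc k) * ((\<Prod>i=1..k. c i) * dist x y)"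
    using simil[rule_format, OF S] IH by (simp add: im Let_def)
  also have "\<dots> = (\<Prod>i=1..Suc k. c i) * dist x y"
    by (simp add: prod.nat_ivl_Suc' mult_ac)
  finally show ?case by (simp add: im Let_def rule_in)
qed

theorem theorem2:
  fixes P U :: "nat \<Rightarrow> complex" and m n :: nat
    and \<theta> :: "nat \<Rightarrow> real" and ori :: "nat \<Rightarrow> bool" and a :: "nat \<Rightarrow> nat"
    and c :: "nat \<Rightarrow> real"
  assumes m3: "m \<ge> 3"
    and dirs: "\<forall>j<m. U j \<noteq> 0"
    and distinct_lines: "\<forall>j<m. \<forall>k<m. j \<noteq> k \<longrightarrow> lline P U j \<noteq> lline P U k"
    and not_concurrent: "\<not> (\<exists>q. \<forall>j<m. q \<in> lline P U j)"
    and generic: "\<exists>j<m. \<forall>k<m. k \<noteq> j \<longrightarrow>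
                     cross2 (U j) (U k) \<noteq> 0 \<and> Re (cnj (U j) * U k) \<noteq> 0"
    and rseq: "is_rule_seq m n \<theta> ori a"
    and nonredundant: "\<not> (\<exists>n' \<theta>' ori' a'. n' < n \<and> is_rule_seq m n' \<theta>' ori' a' \<and>
                        (\<forall>x\<in>Xspace P U m. orbit P U n' \<theta>' ori' a' x = orbit P U n \<theta> ori a x))"
    and simil: "\<forall>i\<in>{1..n}. c i \<ge> 0 \<and>
                  (\<forall>x\<in>lline P U (a (if i = 1 then n else i - 1)).
                   \<forall>y\<in>lline P U (a (if i = 1 then n else i - 1)).
                     dist (rule P U (\<theta> i) (ori i) (a i) x) (rule P U (\<theta> i) (ori i) (a i) y)
                       = c i * dist x y)"
    and contr: "0 \<le> (\<Prod>i=1..n. c i)" "(\<Prod>i=1..n. c i) < 1"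
  shows "\<exists>!x. x \<in> Xspace P U m \<and> Titer P U n \<theta> ori a n x = x"
proof -
  have n1: "n \<ge> 1" and anm: "a n < m" using rseq m3 unfolding is_rule_seq_def by auto
  let ?L = "lline P U (a n)"
  let ?f = "Titer P U n \<theta> ori a n"
  have fL: "\<And>x. ?f x \<in> ?L"
  proof -
    fix x
    obtain k where k: "n = Suc k" using n1 by (cases n) auto
    have "k mod n + 1 = n" using k by simp
    then show "?f x \<in> ?L" using k by (simp add: Let_def rule_in)
  qed
  have lip: "\<And>x y. x \<in> ?L \<Longrightarrow> y \<in> ?L \<Longrightarrow> dist (?f x) (?f y) \<le> (\<Prod>i=1..n. c i) * dist x y"
    using iter_lemma[OF simil] by auto
  have ex: "\<exists>!x\<in>?L. ?f x = x"
  proof (rule Banach_fix[OF _ _ contr])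
    show "complete ?L" by (simp add: complete_eq_closed lline_closed)
    show "?L \<noteq> {}" by (auto simp: lline_def)
    show "?f ` ?L \<subseteq> ?L" using fL by auto
  qed (use lip in auto)
  have LX: "?L \<subseteq> Xspace P U m" using anm by (auto simp: Xspace_def)
  show ?thesis
  proof -
    from ex obtain x where x: "x \<in> ?L" "?f x = x" by auto
    show ?thesis
    proof (rule ex1I[of _ x])
      show "x \<in> Xspace P U m \<and> ?f x = x" using x LX by auto
      fix y assume y: "y \<in> Xspace P U m \<and> ?f y = y"
      then have "y \<in> ?L" using fL by metis
      then show "y = x" using ex x y by auto
    qed
  qed
qed
end
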